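(* If $\mathcal{I}$ is a boring ideal, then every Hausdorff space in $\mathrm{FinBW}(\mathcal{I})$ is a boring space.
   Context: An ideal on an infinite countable set $X$ is a family $\mathcal{I}\subseteq\mathcal{P}(X)$ closed under subsets and finite unions, containing all finite subsets, with $X\notin\mathcal{I}$. A space $X$ is in $\mathrm{FinBW}(\mathcal{I})$ if $X$ is Hausdorff and for every sequence $(x_n)_{n\in\bigcup\mathcal{I}}$ in $X$ there is $A\notin\mathcal{I}$ with $(x_n)_{n\in A}$ convergent in $X$. $\mathrm{Fin}^2$: ideal on $\omega^2$ of all $A$ with only finitely many $n$ such that $\{m:(n,m)\in A\}$ is infinite. $\mathcal{BI}$: ideal on $\omega^3$ of all $A$ for which there is $k$ with $\{(j,l):(i,j,l)\in A\}\in\mathrm{Fin}^2$ for $i<k$ and finite for $i\ge k$. $\mathcal{I}\sqsubseteq\mathcal{J}$: there is a bijection $f:\bigcup\mathcal{J}\to\bigcup\mathcal{I}$ with $f^{-1}[A]\in\mathcal{J}$ for all $A\in\mathcal{I}$. $\mathcal{I}$ is boring if $\mathcal{BI}\sqsubseteq\mathcal{I}$. A topological space is boring if it is sequentially compact and there is a finite $F\subseteq X$ such that every convergent sequence in $X$ with infinitely many distinct values converges to some point of $F$. *)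

theory Defs
  imports "HOL-Analysis.Analysis"
begin

definition is_ideal :: "'a set set \<Rightarrow> bool" where
  "is_ideal I \<longleftrightarrow>
     infinite (\<Union>I) \<and> countable (\<Union>I) \<and>
     (\<forall>A\<in>I. \<forall>B. B \<subseteq> A \<longrightarrow> B \<in> I) \<and>
     (\<forall>A\<in>I. \<forall>B\<in>I. A \<union> B \<in> I) \<and>
     (\<forall>F. F \<subseteq> \<Union>I \<and> finite F \<longrightarrow> F \<in> I) \<and>
     \<Union>I \<notin> I"

definition conv_on :: "'b topology \<Rightarrow> ('a \<Rightarrow> 'b) \<Rightarrow> 'a set \<Rightarrow> bool" where
  "conv_on X x A \<longleftrightarrow>
     (\<exists>l\<in>topspace X. \<forall>U. openin X U \<and> l \<in> U \<longrightarrow> finite {n\<in>A. x n \<notin> U})"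

definition FinBW :: "'a set set \<Rightarrow> 'b topology \<Rightarrow> bool" where
  "FinBW I X \<longleftrightarrow> Hausdorff_space X \<and>
     (\<forall>x. (\<forall>n\<in>\<Union>I. x n \<in> topspace X) \<longrightarrow>
        (\<exists>A. A \<subseteq> \<Union>I \<and> A \<notin> I \<and> conv_on X x A))"

definition Fin2 :: "(nat \<times> nat) set set" where
  "Fin2 = {A. finite {n. infinite {m. (n, m) \<in> A}}}"

definition BI :: "(nat \<times> nat \<times> nat) set set" where
  "BI = {A. \<exists>k. (\<forall>i<k. {(j, l). (i, j, l) \<in> A} \<in> Fin2) \<and>
                (\<forall>i\<ge>k. finite {(j, l). (i, j, l) \<in> A})}"

text \<open>\<open>ideal_below I J\<close> is \<open>I \<sqsubseteq> J\<close>: a bijection f from \<open>\<Union>J\<close> onto \<open>\<Union>I\<close>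
  with \<open>f\<^sup>-\<^sup>1[A] \<in> J\<close> for all \<open>A \<in> I\<close>.\<close>
definition ideal_below :: "'a set set \<Rightarrow> 'c set set \<Rightarrow> bool" where
  "ideal_below I J \<longleftrightarrow>
     (\<exists>f. bij_betw f (\<Union>J) (\<Union>I) \<and> (\<forall>A\<in>I. {n\<in>\<Union>J. f n \<in> A} \<in> J))"

definition boring_ideal :: "'a set set \<Rightarrow> bool" where
  "boring_ideal I \<longleftrightarrow> ideal_below BI I"

definition seq_compact_space :: "'b topology \<Rightarrow> bool" where
  "seq_compact_space X \<longleftrightarrow>
     (\<forall>x::nat \<Rightarrow> 'b. (\<forall>n. x n \<in> topspace X) \<longrightarrow>
        (\<exists>r l. strict_mono r \<and> limitin X (x \<circ> r) l sequentially))"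

definition boring_space :: "'b topology \<Rightarrow> bool" where
  "boring_space X \<longleftrightarrow> seq_compact_space X \<and>
     (\<exists>F. finite F \<and> F \<subseteq> topspace X \<and>
        (\<forall>x::nat \<Rightarrow> 'b. (\<forall>n. x n \<in> topspace X) \<and> (\<exists>l. limitin X x l sequentially)
            \<and> infinite (range x) \<longrightarrow> (\<exists>l\<in>F. limitin X x l sequentially)))"

end

theory Submission
  imports Defs
begin

lemma BI_singleton: "{a} \<in> BI"
  unfolding BI_def
  by (rule CollectI, rule exI[of _ 0]) (auto intro: finite_subset[of _ "{snd a}"])

lemma Union_BI: "\<Union>BI = UNIV"
  using BI_singleton by blast

lemma BI_core:
  assumes bi: "boring_ideal I" and fb: "FinBW I X" and y: "\<forall>n. y n \<in> topspace X"
  shows "\<exists>B. B \<notin> BI \<and> conv_on X y B"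
proof -
  obtain f where bij: "bij_betw f (\<Union>I) UNIV" and pre: "\<forall>A\<in>BI. {n\<in>\<Union>I. f n \<in> A} \<in> I"
    using bi unfolding boring_ideal_def ideal_below_def Union_BI by blast
  have inj: "inj_on f (\<Union>I)" using bij bij_betw_def by blast
  define x where "x = (\<lambda>n. y (f n))"
  have "\<forall>n\<in>\<Union>I. x n \<in> topspace X" unfolding x_def using y by blast
  then obtain A where A: "A \<subseteq> \<Union>I" "A \<notin> I" "conv_on X x A"
    using fb unfolding FinBW_def by blast
  have "f ` A \<notin> BI"
  proof
    assume "f ` A \<in> BI"
    then have "{n\<in>\<Union>I. f n \<in> f ` A} \<in> I" using pre by blast
    moreover have "{n\<in>\<Union>I. f n \<in> f ` A} = A"
      using A(1) inj unfolding inj_on_def by blast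
    ultimately show False using A(2) by simp
  qed
  moreover have "conv_on X y (f ` A)"
  proof -
    obtain l where l: "l \<in> topspace X" "\<forall>U. openin X U \<and> l \<in> U \<longrightarrow> finite {n\<in>A. x n \<notin> U}"
      using A(3) unfolding conv_on_def by blast
    have "finite {m\<in>f ` A. y m \<notin> U}" if "openin X U" "l \<in> U" for U
    proof -
      have "{m\<in>f ` A. y m \<notin> U} = f ` {n\<in>A. x n \<notin> U}" by (auto simp: x_def)
      then show ?thesis using l that by simp
    qed
    then show ?thesis unfolding conv_on_def using l by blast
  qed
  ultimately show ?thesis by blast
qed

lemma conv_subseq:
  fixes x :: "nat \<Rightarrow> 'b"
  assumes S: "infinite S" and l: "l \<in> topspace X"
    and c: "\<forall>U. openin X U \<and> l \<in> U \<longrightarrow> finite {n\<in>S. x n \<notin> U}"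
  shows "limitin X (x \<circ> enumerate S) l sequentially"
  unfolding limitin_def
proof (intro conjI allI impI)
  show "l \<in> topspace X" by fact
  fix U assume U: "openin X U \<and> l \<in> U"
  have "{m. \<not> (x \<circ> enumerate S) m \<in> U} \<subseteq> enumerate S -` {n\<in>S. x n \<notin> U}"
    using enumerate_in_set[OF S] by auto
  moreover have "finite (enumerate S -` {n\<in>S. x n \<notin> U})"
    by (rule finite_vimageI) (use c U inj_enumerate[OF S] in auto)
  ultimately have "finite {m. \<not> (x \<circ> enumerate S) m \<in> U}" by (rule finite_subset)
  then show "\<forall>\<^sub>F m in sequentially. (x \<circ> enumerate S) m \<in> U"
    unfolding cofinite_eq_sequentially[symmetric] eventually_cofinite .
qed

lemma inj_subseq:
  fixes x :: "nat \<Rightarrow> 'b"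
  assumes "infinite (range x)"
  shows "\<exists>r::nat\<Rightarrow>nat. strict_mono r \<and> inj (x \<circ> r)"
proof -
  define T where "T = {n. \<forall>m<n. x m \<noteq> x n}"
  have "range x \<subseteq> x ` T"
  proof
    fix v assume "v \<in> range x"
    then obtain n where n: "x n = v" by blast
    define k where "k = (LEAST k. x k = v)"
    have "x k = v" unfolding k_def using n by (rule LeastI)
    moreover have "k \<in> T"
    proof -
      have "x m \<noteq> x k" if "m < k" for m
        using not_less_Least[of m "\<lambda>k. x k = v"] that \<open>x k = v\<close> unfolding k_def by auto
      then show ?thesis unfolding T_def by blast
    qed
    ultimately show "v \<in> x ` T" by blast
  qed
  then have T: "infinite T" using assms finite_surj by blast
  have "strict_mono (enumerate T)" by (simp add: strict_mono_def enumerate_mono T)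
  moreover have "inj (x \<circ> enumerate T)"
  proof (rule injI)
    fix a b assume ab: "(x \<circ> enumerate T) a = (x \<circ> enumerate T) b"
    show "a = b"
    proof (rule ccontr)
      assume "a \<noteq> b"
      then consider "a < b" | "b < a" by linarith
      then show False
      proof cases
        case 1
        then have "enumerate T a < enumerate T b" using T by simp
        then show False using enumerate_in_set[OF T, of b] ab unfolding T_def by auto
      next
        case 2
        then have "enumerate T b < enumerate T a" using T by simp
        then show False using enumerate_in_set[OF T, of a] ab unfolding T_def by auto
      qed
    qed
  qed
  ultimately show ?thesis by blast
qed

lemma notBI0:
  assumes "B \<notin> BI"
  shows "\<exists>i. infinite {(j, l). (i, j, l) \<in> B}"
proof (rule ccontr)
  assume "\<not> ?thesis"
  then have "\<forall>i. finite {(j, l). (i, j, l) \<in> B}" by blast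
  then have "B \<in> BI" unfolding BI_def by (intro CollectI exI[of _ 0]) auto
  with assms show False by blast
qed

lemma notBI:
  assumes "B \<notin> BI"
  shows "(\<exists>i. {(j, l). (i, j, l) \<in> B} \<notin> Fin2) \<or> infinite {i. infinite {(j, l). (i, j, l) \<in> B}}"
proof (rule ccontr)
  assume "\<not> ?thesis"
  then have a: "\<forall>i. {(j, l). (i, j, l) \<in> B} \<in> Fin2" and b: "finite {i. infinite {(j, l). (i, j, l) \<in> B}}"
    by auto
  obtain k where k: "{i. infinite {(j, l). (i, j, l) \<in> B}} \<subseteq> {..<k}"
    using b finite_nat_iff_bounded by blast
  have "B \<in> BI" unfolding BI_def
    using a k by (intro CollectI exI[of _ k]) auto
  then show False using assms by blast
qed

lemma seq_compact:
  assumes core: "\<And>y. (\<forall>n. y n \<in> topspace X) \<Longrightarrow> \<exists>B. B \<notin> BI \<and> conv_on X y B"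
  shows "seq_compact_space X"
  unfolding seq_compact_space_def
proof (intro allI impI)
  fix x :: "nat \<Rightarrow> _" assume x: "\<forall>n. x n \<in> topspace X"
  define y where "y = (\<lambda>(i::nat, j, l). x (prod_encode (j, l)))"
  have "\<forall>n. y n \<in> topspace X" using x by (auto simp: y_def)
  then obtain B where B: "B \<notin> BI" "conv_on X y B" using core by blast
  obtain l where l: "l \<in> topspace X" "\<forall>U. openin X U \<and> l \<in> U \<longrightarrow> finite {n\<in>B. y n \<notin> U}"
    using B(2) unfolding conv_on_def by blast
  obtain i where i: "infinite {(j, l). (i, j, l) \<in> B}" using notBI0[OF B(1)] by blast
  define S where "S = prod_encode ` {(j, l). (i, j, l) \<in> B}"
  have S: "infinite S" unfolding S_def using i finite_imageD[OF _ inj_prod_encode] by blast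
  have "finite {n\<in>S. x n \<notin> U}" if U: "openin X U \<and> l \<in> U" for U
  proof -
    have "{n\<in>S. x n \<notin> U} \<subseteq> (\<lambda>(i, j, l). prod_encode (j, l)) ` {n\<in>B. y n \<notin> U}"
    proof
      fix n assume "n \<in> {n\<in>S. x n \<notin> U}"
      then obtain j l where jl: "(i, j, l) \<in> B" "n = prod_encode (j, l)" "x n \<notin> U"
        unfolding S_def by auto
      then have "(i, j, l) \<in> {n\<in>B. y n \<notin> U}" by (simp add: y_def)
      from rev_image_eqI[OF this, of n "\<lambda>(i, j, l). prod_encode (j, l)"]
      show "n \<in> (\<lambda>(i, j, l). prod_encode (j, l)) ` {n\<in>B. y n \<notin> U}" using jl(2) by simp
    qed
    then show ?thesis using l U finite_subset by blast
  qed
  then have "limitin X (x \<circ> enumerate S) l sequentially"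
    using conv_subseq[OF S l(1)] by blast
  moreover have "strict_mono (enumerate S)" by (simp add: strict_mono_def enumerate_mono S)
  ultimately show "\<exists>r l. strict_mono r \<and> limitin X (x \<circ> r) l sequentially" by blast
qed


lemma two_elems:
  assumes "infinite S"
  obtains a b where "a \<in> S" "b \<in> S" "a \<noteq> b"
proof -
  obtain a where a: "a \<in> S" using assms by (metis ex_in_conv finite.emptyI)
  have "infinite (S - {a})" using assms by simp
  then obtain b where "b \<in> S - {a}" by (metis ex_in_conv finite.emptyI)
  then show ?thesis using that a by blast
qed

lemma boring_part:
  assumes H: "Hausdorff_space X"
    and core: "\<And>y. (\<forall>n. y n \<in> topspace X) \<Longrightarrow> \<exists>B. B \<notin> BI \<and> conv_on X y B"
  shows "\<exists>F. finite F \<and> F \<subseteq> topspace X \<and>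
        (\<forall>x::nat \<Rightarrow> _. (\<forall>n. x n \<in> topspace X) \<and> (\<exists>l. limitin X x l sequentially)
            \<and> infinite (range x) \<longrightarrow> (\<exists>l\<in>F. limitin X x l sequentially))"
proof (rule ccontr)
  assume nb: "\<not> ?thesis"
  define L where "L = {l. \<exists>x::nat \<Rightarrow> _. (\<forall>n. x n \<in> topspace X) \<and> limitin X x l sequentially \<and> infinite (range x)}"
  have LX: "L \<subseteq> topspace X" unfolding L_def by (auto dest: limitin_topspace)
  have "infinite L"
  proof
    assume "finite L"
    moreover have "(\<forall>x::nat \<Rightarrow> _. (\<forall>n. x n \<in> topspace X) \<and> (\<exists>l. limitin X x l sequentially)
            \<and> infinite (range x) \<longrightarrow> (\<exists>l\<in>L. limitin X x l sequentially))"
      unfolding L_def by blast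
    ultimately show False using nb LX by blast
  qed
  then obtain p :: "nat \<Rightarrow> _" where p: "inj p" "range p \<subseteq> L"
    using infinite_countable_subset by blast
  have "\<exists>s::nat \<Rightarrow> _. (\<forall>j. s j \<in> topspace X) \<and> limitin X s (p n) sequentially \<and> inj s" for n
  proof -
    obtain s :: "nat \<Rightarrow> _" where s: "\<forall>n. s n \<in> topspace X" "limitin X s (p n) sequentially" "infinite (range s)"
      using p(2) unfolding L_def by blast
    obtain r :: "nat \<Rightarrow> nat" where r: "strict_mono r" "inj (s \<circ> r)" using inj_subseq[OF s(3)] by blast
    show ?thesis
      by (rule exI[of _ "s \<circ> r"]) (use s r limitin_subsequence in auto)
  qed
  then obtain x :: "nat \<Rightarrow> nat \<Rightarrow> _" where x: "\<And>n j. x n j \<in> topspace X"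
    "\<And>n. limitin X (x n) (p n) sequentially" "\<And>n. inj (x n)"
    by metis
  have fin: "finite {j. x n j \<in> range (x k)}" if "k \<noteq> n" for n k
  proof -
    have "p n \<noteq> p k" using p(1) that by (auto dest: injD)
    then obtain U V where UV: "openin X U" "openin X V" "p n \<in> U" "p k \<in> V" "disjnt U V"
      using H x(2) limitin_topspace unfolding Hausdorff_space_def by metis
    have "\<forall>\<^sub>F j in sequentially. x n j \<in> U" using x(2) UV unfolding limitin_def by blast
    then have f1: "finite {j. x n j \<notin> U}"
      unfolding cofinite_eq_sequentially[symmetric] eventually_cofinite by simp
    have "\<forall>\<^sub>F j in sequentially. x k j \<in> V" using x(2) UV unfolding limitin_def by blast
    then have f2: "finite {j. x k j \<notin> V}"
      unfolding cofinite_eq_sequentially[symmetric] eventually_cofinite by simp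
    have f3: "finite (x n -` (x k ` {j. x k j \<notin> V}))"
      by (rule finite_vimageI) (use f2 x(3) in auto)
    have "{j. x n j \<in> range (x k)} \<subseteq> {j. x n j \<notin> U} \<union> x n -` (x k ` {j. x k j \<notin> V})"
    proof
      fix j assume "j \<in> {j. x n j \<in> range (x k)}"
      then obtain m where m: "x n j = x k m" by auto
      show "j \<in> {j. x n j \<notin> U} \<union> x n -` (x k ` {j. x k j \<notin> V})"
      proof (cases "x n j \<in> U")
        case True
        then have "x k m \<notin> V" using m UV(5) by (auto simp: disjnt_def)
        then have "x n j \<in> x k ` {j. x k j \<notin> V}" using m by blast
        then show ?thesis by blast
      qed simp
    qed
    then show ?thesis using f1 f3 finite_subset by blast
  qed
  have "\<exists>N. \<forall>j. (\<exists>k<n. x n j \<in> range (x k)) \<longrightarrow> j < N" for n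
  proof -
    have "{j. \<exists>k<n. x n j \<in> range (x k)} = (\<Union>k<n. {j. x n j \<in> range (x k)})" by blast
    moreover have "finite (\<Union>k<n. {j. x n j \<in> range (x k)})"
      by (intro finite_UN_I finite_lessThan fin) simp
    ultimately have "finite {j. \<exists>k<n. x n j \<in> range (x k)}" by simp
    then obtain M where "{j. \<exists>k<n. x n j \<in> range (x k)} \<subseteq> {..<M}"
      unfolding finite_nat_iff_bounded by blast
    then show ?thesis by (intro exI[of _ M] allI impI) blast
  qed
  then have "\<forall>n. \<exists>N. \<forall>j. (\<exists>k<n. x n j \<in> range (x k)) \<longrightarrow> j < N" by (rule allI)
  then have "\<exists>N. \<forall>n. \<forall>j. (\<exists>k<n. x n j \<in> range (x k)) \<longrightarrow> j < N n" by (rule choice)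
  then obtain N where
    N0: "\<forall>n. \<forall>j. (\<exists>k<n. x n j \<in> range (x k)) \<longrightarrow> j < N n" by (elim exE)
  have N: "\<And>n j k. k < n \<Longrightarrow> x n j \<in> range (x k) \<Longrightarrow> j < N n" using N0 by blast
  define u where "u = (\<lambda>n j. x n (j + N n))"
  have u_top: "\<And>n j. u n j \<in> topspace X" using x(1) u_def by simp
  have u_lim: "\<And>n. limitin X (u n) (p n) sequentially"
    unfolding u_def by (rule limitin_sequentially_offset[OF x(2)])
  have u_inj: "\<And>n. inj (u n)" unfolding u_def inj_def using x(3) by (metis add_right_cancel injD)
  have u_disj: "range (u n) \<inter> range (u k) = {}" if "k < n" for n k
  proof -
    have "v \<notin> range (u k)" if "v \<in> range (u n)" for v
    proof
      assume "v \<in> range (u k)"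
      then obtain m where "v = u k m" by blast
      then have "v = x k (m + N k)" by (simp add: u_def)
      then have vk: "v \<in> range (x k)" by blast
      obtain j where "v = u n j" using \<open>v \<in> range (u n)\<close> by blast
      then have "v = x n (j + N n)" by (simp add: u_def)
      then have "j + N n < N n" using N[OF \<open>k < n\<close>, of "j + N n"] vk by simp
      then show False by simp
    qed
    then show ?thesis by blast
  qed
  define y where "y = (\<lambda>(i::nat, j::nat, l::nat). u i j)"
  have "\<forall>n. y n \<in> topspace X" using u_top by (auto simp: y_def)
  then obtain B where B: "B \<notin> BI" "conv_on X y B" using core by blast
  obtain q where q: "q \<in> topspace X" "\<And>U. openin X U \<Longrightarrow> q \<in> U \<Longrightarrow> finite {n\<in>B. y n \<notin> U}"
    using B(2) unfolding conv_on_def by blast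
  have colA: "q = u i j" if inf: "infinite {l. (i, j, l) \<in> B}" for i j
  proof (rule ccontr)
    assume ne: "q \<noteq> u i j"
    then obtain U V where UV: "openin X U" "openin X V" "q \<in> U" "u i j \<in> V" "disjnt U V"
      using H q(1) u_top unfolding Hausdorff_space_def by metis
    have "(\<lambda>l. (i, j, l)) ` {l. (i, j, l) \<in> B} \<subseteq> {n\<in>B. y n \<notin> U}"
      using UV(4,5) by (auto simp: y_def disjnt_def)
    then have "finite ((\<lambda>l. (i, j, l)) ` {l. (i, j, l) \<in> B})" using q(2)[OF UV(1,3)] finite_subset by blast
    then have "finite {l. (i, j, l) \<in> B}" using finite_imageD inj_on_def by (metis (mono_tags, lifting) prod.inject)
    then show False using inf by blast
  qed
  have rowB: "q = p i \<or> q \<in> range (u i)" if inf: "infinite {(j, l). (i, j, l) \<in> B}" for i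
  proof (cases "\<exists>j. infinite {l. (i, j, l) \<in> B}")
    case True
    then show ?thesis using colA by blast
  next
    case False
    define J where "J = {j. \<exists>l. (i, j, l) \<in> B}"
    have "{(j, l). (i, j, l) \<in> B} \<subseteq> Sigma J (\<lambda>j. {l. (i, j, l) \<in> B})" unfolding J_def by auto
    then have J: "infinite J" using inf False finite_SigmaI finite_subset by (metis (no_types, lifting))
    have "q = p i"
    proof (rule ccontr)
      assume "q \<noteq> p i"
      then obtain U V where UV: "openin X U" "openin X V" "q \<in> U" "p i \<in> V" "disjnt U V"
        using H q(1) u_lim limitin_topspace unfolding Hausdorff_space_def by metis
      have "\<forall>\<^sub>F j in sequentially. u i j \<in> V" using u_lim UV unfolding limitin_def by blast
      then have f1: "finite {j. u i j \<notin> V}"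
        unfolding cofinite_eq_sequentially[symmetric] eventually_cofinite by simp
      define J' where "J' = J - {j. u i j \<notin> V}"
      have J': "infinite J'" unfolding J'_def using J f1 by auto
      define g where "g = (\<lambda>j. SOME l. (i, j, l) \<in> B)"
      have g: "(i, j, g j) \<in> B" if "j \<in> J" for j
        unfolding g_def using that J_def someI_ex[of "\<lambda>l. (i, j, l) \<in> B"] by auto
      have "(\<lambda>j. (i, j, g j)) ` J' \<subseteq> {n\<in>B. y n \<notin> U}"
        using g UV(5) unfolding J'_def by (auto simp: y_def disjnt_def)
      then have "finite ((\<lambda>j. (i, j, g j)) ` J')" using q(2)[OF UV(1,3)] finite_subset by blast
      moreover have "inj_on (\<lambda>j. (i, j, g j)) J'" by (auto simp: inj_on_def)
      ultimately have "finite J'" using finite_image_iff by blast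
      then show False using J' by blast
    qed
    then show ?thesis by blast
  qed
  have rowF: "{(j, l). (i, j, l) \<in> B} \<in> Fin2" for i
  proof (rule ccontr)
    assume "{(j, l). (i, j, l) \<in> B} \<notin> Fin2"
    then have inf: "infinite {j. infinite {l. (i, j, l) \<in> B}}" unfolding Fin2_def by simp
    obtain j1 j2 where j12: "j1 \<in> {j. infinite {l. (i, j, l) \<in> B}}"
      "j2 \<in> {j. infinite {l. (i, j, l) \<in> B}}" "j1 \<noteq> j2"
      using two_elems[OF inf] by metis
    have e1: "q = u i j1" using colA j12(1) by blast
    have e2: "q = u i j2" using colA j12(2) by blast
    have "j1 = j2" using injD[OF u_inj, of i j1 j2] e1 e2 by simp
    then show False using j12(3) by blast
  qed
  have infI: "infinite {i. infinite {(j, l). (i, j, l) \<in> B}}" using notBI[OF B(1)] rowF by blast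
  have "finite {i. q = p i}"
  proof -
    have "{i. q = p i} = p -` {q}" by auto
    then show ?thesis using finite_vimageI[OF _ p(1), of "{q}"] by simp
  qed
  moreover have "{i. infinite {(j, l). (i, j, l) \<in> B}} \<subseteq> {i. q = p i} \<union> {i. q \<in> range (u i)}"
    using rowB by blast
  ultimately have inf2: "infinite {i. q \<in> range (u i)}" using infI finite_subset by blast
  obtain i1 i2 where i12: "i1 \<in> {i. q \<in> range (u i)}" "i2 \<in> {i. q \<in> range (u i)}" "i1 \<noteq> i2"
    using two_elems[OF inf2] by metis
  have "i1 < i2 \<or> i2 < i1" using i12(3) by linarith
  then show False
  proof
    assume "i1 < i2" then show False using u_disj[of i1 i2] i12 by blast
  next
    assume "i2 < i1" then show False using u_disj[of i2 i1] i12 by blast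
  qed
qed

theorem proposition6p3:
  fixes I :: "'a set set" and X :: "'b topology"
  assumes "is_ideal I" and "boring_ideal I"
    and "Hausdorff_space X" and "FinBW I X"
  shows "boring_space X"
proof -
  have core: "\<And>y. (\<forall>n. y n \<in> topspace X) \<Longrightarrow> \<exists>B. B \<notin> BI \<and> conv_on X y B"
    using BI_core[OF assms(2,4)] by blast
  show ?thesis unfolding boring_space_def
    using seq_compact[OF core] boring_part[OF assms(3) core] by blast
qed

end
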